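(* For any bisimulation congruence $(C_1,C_2)$ on $(\Sigma^\ast,\Sigma^{\ast+})$, we have $(C_1,C_2)=T(M(C_1,C_2))$, where $M(C_1,C_2)$ is the pointed lasso automaton $(\Sigma^\ast/C_1,\Sigma^{\ast+}/C_2,[\epsilon]_{C_1},\sigma_1,\sigma_2,\sigma_3)$ with $\sigma_1([w])(a)=[wa]$, $\sigma_2([w])(a)=[(w,a)]$, $\sigma_3([(u,v)])(a)=[(u,va)]$, and $T$ of a pointed lasso automaton is $(\ker\delta_1^\sharp,\ker\delta^\sharp)$.
   Context: $\Sigma$ is a finite alphabet, $\Sigma^{\ast+}=\Sigma^\ast\times\Sigma^+$ the lassos. A pointed lasso automaton is $(X_1,X_2,\overline{x},\delta_1,\delta_2,\delta_3)$ with disjoint $X_1,X_2$, $\overline{x}\in X_1$, $\delta_1:X_1\times\Sigma\to X_1$, $\delta_2:X_1\times\Sigma\to X_2$, $\delta_3:X_2\times\Sigma\to X_2$; extend $\delta_1,\delta_3$ to words, set $\delta_\circ(x,av)=\delta_3(\delta_2(x,a),v)$ for $x\in X_1$ and $\delta(x,(u,v))=\delta_\circ(\delta_1(x,u),v)$. $\ker\delta_1^\sharp=\{(u,v)\mid\forall x\in X_1:\delta_1(x,u)=\delta_1(x,v)\}$, $\ker\delta^\sharp=\{((u,v),(u',v'))\mid\forall x\in X_1:\delta(x,(u,v))=\delta(x,(u',v'))\}$. A bisimulation congruence is a pair $(C_1,C_2)$ of equivalence relations on $\Sigma^\ast$ and $\Sigma^{\ast+}$ such that: $C_1$ is a monoid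 congruence on $\Sigma^\ast$; $(w,w')\in C_1$ and $((u,v),(u',v'))\in C_2$ imply $((wu,v),(w'u',v'))\in C_2$; $(u,u')\in C_1$ implies $(ua,u'a)\in C_1$ and $((u,a),(u',a))\in C_2$; $((u,v),(u',v'))\in C_2$ implies $((u,va),(u',v'a))\in C_2$ (these conditions make $M(C_1,C_2)$ well defined). *)

theory Defs
  imports Main
begin

definition lassos :: "('a list \<times> 'a list) set" where
  "lassos = {(u, v). v \<noteq> []}"

record ('s1, 's2, 'a) pla =
  X1 :: "'s1 set"
  X2 :: "'s2 set"
  xbar :: 's1
  d1 :: "'s1 \<Rightarrow> 'a \<Rightarrow> 's1"
  d2 :: "'s1 \<Rightarrow> 'a \<Rightarrow> 's2"
  d3 :: "'s2 \<Rightarrow> 'a \<Rightarrow> 's2"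

definition pla_wf :: "('s1, 's2, 'a) pla \<Rightarrow> bool" where
  "pla_wf A \<longleftrightarrow> xbar A \<in> X1 A
     \<and> (\<forall>x\<in>X1 A. \<forall>a. d1 A x a \<in> X1 A \<and> d2 A x a \<in> X2 A)
     \<and> (\<forall>y\<in>X2 A. \<forall>a. d3 A y a \<in> X2 A)"

definition d1w :: "('s1, 's2, 'a) pla \<Rightarrow> 's1 \<Rightarrow> 'a list \<Rightarrow> 's1" where
  "d1w A x u = foldl (d1 A) x u"

definition d3w :: "('s1, 's2, 'a) pla \<Rightarrow> 's2 \<Rightarrow> 'a list \<Rightarrow> 's2" where
  "d3w A y u = foldl (d3 A) y u"

text \<open>delta_circ(x, a v) = delta3(delta2(x,a), v) (only meaningful for nonempty words).\<close>
definition dcirc :: "('s1, 's2, 'a) pla \<Rightarrow> 's1 \<Rightarrow> 'a list \<Rightarrow> 's2" where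
  "dcirc A x w = d3w A (d2 A x (hd w)) (tl w)"

definition dlasso :: "('s1, 's2, 'a) pla \<Rightarrow> 's1 \<Rightarrow> 'a list \<times> 'a list \<Rightarrow> 's2" where
  "dlasso A x uv = dcirc A (d1w A x (fst uv)) (snd uv)"

definition ker1 :: "('s1, 's2, 'a) pla \<Rightarrow> ('a list \<times> 'a list) set" where
  "ker1 A = {(u, v). \<forall>x\<in>X1 A. d1w A x u = d1w A x v}"

definition ker2 :: "('s1, 's2, 'a) pla \<Rightarrow> (('a list \<times> 'a list) \<times> ('a list \<times> 'a list)) set" where
  "ker2 A = {(p, q). p \<in> lassos \<and> q \<in> lassos \<and> (\<forall>x\<in>X1 A. dlasso A x p = dlasso A x q)}"

definition T :: "('s1, 's2, 'a) pla \<Rightarrow> ('a list \<times> 'a list) set \<times> (('a list \<times> 'a list) \<times> ('a list \<times> 'a list)) set" where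
  "T A = (ker1 A, ker2 A)"

definition bisim_cong :: "('a list \<times> 'a list) set \<Rightarrow> (('a list \<times> 'a list) \<times> ('a list \<times> 'a list)) set \<Rightarrow> bool" where
  "bisim_cong C1 C2 \<longleftrightarrow>
     equiv UNIV C1 \<and> equiv lassos C2
     \<and> (\<forall>w w' u u'. (w, w') \<in> C1 \<longrightarrow> (u, u') \<in> C1 \<longrightarrow> (w @ u, w' @ u') \<in> C1)
     \<and> (\<forall>w w' u v u' v'. (w, w') \<in> C1 \<longrightarrow> ((u, v), (u', v')) \<in> C2 \<longrightarrow> ((w @ u, v), (w' @ u', v')) \<in> C2)
     \<and> (\<forall>u u' a. (u, u') \<in> C1 \<longrightarrow> (u @ [a], u' @ [a]) \<in> C1 \<and> ((u, [a]), (u', [a])) \<in> C2)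
     \<and> (\<forall>u v u' v' a. ((u, v), (u', v')) \<in> C2 \<longrightarrow> ((u, v @ [a]), (u', v' @ [a])) \<in> C2)"

text \<open>The transitions act on a class by
  taking the C-closure of the image of its representatives (which is exactly the class
  of [wa], [(w,a)], [(u,va)] resp., since (C1,C2) is a bisimulation congruence).\<close>
definition M :: "('a list \<times> 'a list) set \<Rightarrow> (('a list \<times> 'a list) \<times> ('a list \<times> 'a list)) set
    \<Rightarrow> ('a list set, ('a list \<times> 'a list) set, 'a) pla" where
  "M C1 C2 = \<lparr> X1 = UNIV // C1, X2 = lassos // C2, xbar = C1 `` {[]},
     d1 = (\<lambda>X a. C1 `` ((\<lambda>w. w @ [a]) ` X)),
     d2 = (\<lambda>X a. C2 `` ((\<lambda>w. (w, [a])) ` X)),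
     d3 = (\<lambda>Y a. C2 `` ((\<lambda>(u, v). (u, v @ [a])) ` Y)) \<rparr>"

end

theory Submission
  imports Defs
begin

lemma bc_facts:
  assumes "bisim_cong C1 C2"
  shows "equiv UNIV C1" "equiv lassos C2"
    "\<And>w w' u u'. (w, w') \<in> C1 \<Longrightarrow> (u, u') \<in> C1 \<Longrightarrow> (w @ u, w' @ u') \<in> C1"
    "\<And>w w' u v u' v'. (w, w') \<in> C1 \<Longrightarrow> ((u, v), (u', v')) \<in> C2 \<Longrightarrow> ((w @ u, v), (w' @ u', v')) \<in> C2"
    "\<And>u u' a. (u, u') \<in> C1 \<Longrightarrow> (u @ [a], u' @ [a]) \<in> C1"
    "\<And>u u' a. (u, u') \<in> C1 \<Longrightarrow> ((u, [a]), (u', [a])) \<in> C2"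
    "\<And>u v u' v' a. ((u, v), (u', v')) \<in> C2 \<Longrightarrow> ((u, v @ [a]), (u', v' @ [a])) \<in> C2"
  using assms unfolding bisim_cong_def by blast+

lemma equiv_props:
  assumes "equiv A r"
  shows "\<And>x y. (x,y) \<in> r \<Longrightarrow> (y,x) \<in> r" "\<And>x y z. (x,y) \<in> r \<Longrightarrow> (y,z) \<in> r \<Longrightarrow> (x,z) \<in> r"
    "\<And>x. x \<in> A \<Longrightarrow> (x,x) \<in> r" "\<And>x y. (x,y) \<in> r \<Longrightarrow> x \<in> A \<and> y \<in> A"
  using assms unfolding equiv_def refl_on_def sym_def trans_def by blast+

lemma d1_class:
  assumes "bisim_cong C1 C2"
  shows "d1 (M C1 C2) (C1 `` {w}) a = C1 `` {w @ [a]}"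
proof -
  note B = bc_facts[OF assms]
  note E = equiv_props[OF B(1)]
  have eq: "d1 (M C1 C2) (C1 `` {w}) a = C1 `` ((\<lambda>w. w @ [a]) ` (C1 `` {w}))"
    by (simp add: M_def)
  show ?thesis unfolding eq
  proof (rule set_eqI, rule iffI)
    fix x assume "x \<in> C1 `` ((\<lambda>w. w @ [a]) ` (C1 `` {w}))"
    then obtain w' where "(w, w') \<in> C1" "(w' @ [a], x) \<in> C1" by blast
    then show "x \<in> C1 `` {w @ [a]}" using B(5) E(2) by blast
  next
    fix x assume "x \<in> C1 `` {w @ [a]}"
    moreover have "(w, w) \<in> C1" using E(3) by blast
    ultimately show "x \<in> C1 `` ((\<lambda>w. w @ [a]) ` (C1 `` {w}))" by blast
  qed
qed

lemma d2_class:
  assumes "bisim_cong C1 C2"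
  shows "d2 (M C1 C2) (C1 `` {w}) a = C2 `` {(w, [a])}"
proof -
  note B = bc_facts[OF assms]
  note E = equiv_props[OF B(1)]
  note E2 = equiv_props[OF B(2)]
  have eq: "d2 (M C1 C2) (C1 `` {w}) a = C2 `` ((\<lambda>w. (w, [a])) ` (C1 `` {w}))"
    by (simp add: M_def)
  show ?thesis unfolding eq
  proof (rule set_eqI, rule iffI)
    fix x assume "x \<in> C2 `` ((\<lambda>w. (w, [a])) ` (C1 `` {w}))"
    then obtain w' where "(w, w') \<in> C1" "((w', [a]), x) \<in> C2" by blast
    then show "x \<in> C2 `` {(w, [a])}" using B(6) E2(2) by blast
  next
    fix x assume "x \<in> C2 `` {(w, [a])}"
    moreover have "(w, w) \<in> C1" using E(3) by blast
    ultimately show "x \<in> C2 `` ((\<lambda>w. (w, [a])) ` (C1 `` {w}))" by blast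
  qed
qed

lemma d3_class:
  assumes "bisim_cong C1 C2" "v \<noteq> []"
  shows "d3 (M C1 C2) (C2 `` {(u, v)}) a = C2 `` {(u, v @ [a])}"
proof -
  note B = bc_facts[OF assms(1)]
  note E2 = equiv_props[OF B(2)]
  have L: "(u, v) \<in> lassos" using assms(2) by (simp add: lassos_def)
  have eq: "d3 (M C1 C2) (C2 `` {(u, v)}) a = C2 `` ((\<lambda>(u, v). (u, v @ [a])) ` (C2 `` {(u, v)}))"
    by (simp add: M_def)
  show ?thesis unfolding eq
  proof (rule set_eqI, rule iffI)
    fix x assume "x \<in> C2 `` ((\<lambda>(u, v). (u, v @ [a])) ` (C2 `` {(u, v)}))"
    then obtain u' v' where "((u, v), (u', v')) \<in> C2" "((u', v' @ [a]), x) \<in> C2" by (auto simp: Image_def)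
    then show "x \<in> C2 `` {(u, v @ [a])}" using B(7) E2(2) by blast
  next
    fix x assume "x \<in> C2 `` {(u, v @ [a])}"
    moreover have "((u, v), (u, v)) \<in> C2" using E2(3) L by blast
    ultimately show "x \<in> C2 `` ((\<lambda>(u, v). (u, v @ [a])) ` (C2 `` {(u, v)}))" by force
  qed
qed

lemma d1w_class:
  assumes "bisim_cong C1 C2"
  shows "d1w (M C1 C2) (C1 `` {w}) u = C1 `` {w @ u}"
  unfolding d1w_def
proof (induction u arbitrary: w)
  case Nil then show ?case by simp
next
  case (Cons a u)
  show ?case using Cons d1_class[OF assms, of w a] by simp
qed

lemma d3w_class:
  assumes "bisim_cong C1 C2" "v \<noteq> []"
  shows "d3w (M C1 C2) (C2 `` {(u, v)}) x = C2 `` {(u, v @ x)}"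
  using assms(2) unfolding d3w_def
proof (induction x arbitrary: v)
  case Nil then show ?case by simp
next
  case (Cons a x)
  have "v @ [a] \<noteq> []" by simp
  then show ?case using Cons.IH[of "v @ [a]"] d3_class[OF assms(1) Cons.prems, of u a] by simp
qed

lemma dlasso_class:
  assumes "bisim_cong C1 C2" "v \<noteq> []"
  shows "dlasso (M C1 C2) (C1 `` {w}) (u, v) = C2 `` {(w @ u, v)}"
proof -
  obtain b x where v: "v = b # x" using assms(2) by (cases v) auto
  show ?thesis
    unfolding dlasso_def dcirc_def
    using d1w_class[OF assms(1), of w u] d2_class[OF assms(1), of "w @ u" b]
      d3w_class[OF assms(1), of "[b]" "w @ u" x] v by simp
qed

theorem mainTheorem13:
  fixes C1 :: "('a::finite list \<times> 'a list) set"
    and C2 :: "(('a list \<times> 'a list) \<times> ('a list \<times> 'a list)) set"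
  assumes "bisim_cong C1 C2"
  shows "(C1, C2) = T (M C1 C2)"
proof -
  note B = bc_facts[OF assms]
  note E = equiv_props[OF B(1)]
  note E2 = equiv_props[OF B(2)]
  have X1: "X1 (M C1 C2) = UNIV // C1" by (simp add: M_def)
  have k1e: "(u, v) \<in> C1 \<longleftrightarrow> (\<forall>X\<in>UNIV // C1. d1w (M C1 C2) X u = d1w (M C1 C2) X v)" for u v
  proof
    assume uv: "(u, v) \<in> C1"
    show "\<forall>X\<in>UNIV // C1. d1w (M C1 C2) X u = d1w (M C1 C2) X v"
    proof
      fix X assume X: "X \<in> UNIV // C1"
      then obtain w where w: "X = C1 `` {w}" by (auto elim: quotientE)
      have "(w @ u, w @ v) \<in> C1" using B(3) E(3) uv by blast
      then have "C1 `` {w @ u} = C1 `` {w @ v}" using equiv_class_eq_iff[OF B(1)] by blast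
      then show "d1w (M C1 C2) X u = d1w (M C1 C2) X v"
        using w d1w_class[OF assms] by simp
    qed
  next
    assume "\<forall>X\<in>UNIV // C1. d1w (M C1 C2) X u = d1w (M C1 C2) X v"
    then have "d1w (M C1 C2) (C1 `` {[]}) u = d1w (M C1 C2) (C1 `` {[]}) v"
      by (simp add: quotientI)
    then have "C1 `` {u} = C1 `` {v}" using d1w_class[OF assms] by simp
    then show "(u, v) \<in> C1" using equiv_class_eq_iff[OF B(1)] by blast
  qed
  have k1: "C1 = ker1 (M C1 C2)"
    using k1e by (auto simp: ker1_def X1)
  have k2e: "((u, v), (u', v')) \<in> C2 \<longleftrightarrow> (u, v) \<in> lassos \<and> (u', v') \<in> lassos \<and>
     (\<forall>X\<in>UNIV // C1. dlasso (M C1 C2) X (u, v) = dlasso (M C1 C2) X (u', v'))" for u v u' v'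
  proof
    assume p: "((u, v), u', v') \<in> C2"
    have l: "(u, v) \<in> lassos" "(u', v') \<in> lassos" using E2(4) p by blast+
    then have nv: "v \<noteq> []" "v' \<noteq> []" by (auto simp: lassos_def)
    have "\<forall>X\<in>UNIV // C1. dlasso (M C1 C2) X (u, v) = dlasso (M C1 C2) X (u', v')"
    proof
      fix X assume X: "X \<in> UNIV // C1"
      then obtain w where w: "X = C1 `` {w}" by (auto elim: quotientE)
      have "((w @ u, v), (w @ u', v')) \<in> C2" using B(4) E(3) p by blast
      then have "C2 `` {(w @ u, v)} = C2 `` {(w @ u', v')}" using equiv_class_eq_iff[OF B(2)] by blast
      then show "dlasso (M C1 C2) X (u, v) = dlasso (M C1 C2) X (u', v')"
        using w dlasso_class[OF assms nv(1)] dlasso_class[OF assms nv(2)] by simp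
    qed
    then show "(u, v) \<in> lassos \<and> (u', v') \<in> lassos \<and>
     (\<forall>X\<in>UNIV // C1. dlasso (M C1 C2) X (u, v) = dlasso (M C1 C2) X (u', v'))" using l by blast
  next
    assume H: "(u, v) \<in> lassos \<and> (u', v') \<in> lassos \<and>
     (\<forall>X\<in>UNIV // C1. dlasso (M C1 C2) X (u, v) = dlasso (M C1 C2) X (u', v'))"
    then have l: "(u, v) \<in> lassos" "(u', v') \<in> lassos" by blast+
    then have nv: "v \<noteq> []" "v' \<noteq> []" by (auto simp: lassos_def)
    have "dlasso (M C1 C2) (C1 `` {[]}) (u, v) = dlasso (M C1 C2) (C1 `` {[]}) (u', v')"
      using H by (simp add: quotientI)
    then have "C2 `` {(u, v)} = C2 `` {(u', v')}"
      using dlasso_class[OF assms nv(1)] dlasso_class[OF assms nv(2)] by simp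
    then show "((u, v), u', v') \<in> C2" using equiv_class_eq_iff[OF B(2)] l by blast
  qed
  have k2: "C2 = ker2 (M C1 C2)"
    using k2e by (auto simp: ker2_def X1)
  show ?thesis using k1 k2 by (simp add: T_def)
qed

end
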